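(* Consider a one-dimensional SOCO problem with norm $\|\cdot\|$, let $\theta\ge1$ and $N$ the norm with $N(1)=\theta\|1\|$. Then, with probability $1$, $\mathbb{E}[SC(RBG(N))]\le OPT_N/\theta$.
   Context: The decision space is a compact interval $F=[x_L,x_H]\subseteq\mathbb{R}^+$, $\|\cdot\|$ is a norm on $\mathbb{R}$, and cost functions $c^t:F\to\mathbb{R}^+$ are convex with uniformly bounded subgradients. Algorithm RBG($N$): define $w^0(x)=N(x)$ and $w^t(x)=\min_{y\in F}\{w^{t-1}(y)+c^t(y)+N(x-y)\}$; draw $r$ uniformly at random from $(-1,1)$ once; at each time $t$ choose $x^t\in F$ minimizing $Y^t(x)=w^{t-1}(x)+rN(x)$. Switching cost (in the original norm): $SC(RBG(N))=\sum_{t=1}^T\|x^{t+1}-x^t\|$. $OPT_N=\min_{(x^1,\dots,x^T)\in F^T}\sum_{t=1}^Tc^t(x^t)+N(x^t-x^{t-1})$ with $x^0=0$. The expectation is over $r$. *)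

theory Defs
  imports "HOL-Analysis.Analysis"
begin

definition is_norm_real :: "(real \<Rightarrow> real) \<Rightarrow> bool" where
  "is_norm_real nrm \<longleftrightarrow>
     (\<forall>x. 0 \<le> nrm x) \<and> (\<forall>x. nrm x = 0 \<longleftrightarrow> x = 0) \<and>
     (\<forall>c x. nrm (c * x) = \<bar>c\<bar> * nrm x) \<and>
     (\<forall>x y. nrm (x + y) \<le> nrm x + nrm y)"

definition soco_costs :: "real \<Rightarrow> real \<Rightarrow> nat \<Rightarrow> (nat \<Rightarrow> real \<Rightarrow> real) \<Rightarrow> bool" where
  "soco_costs xL xH T c \<longleftrightarrow>
     (\<forall>t\<in>{1..T}. convex_on {xL..xH} (c t) \<and> (\<forall>x\<in>{xL..xH}. 0 \<le> c t x)) \<and>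
     (\<exists>G. \<forall>t\<in>{1..T}. \<forall>x\<in>{xL..xH}.
         \<exists>g. \<bar>g\<bar> \<le> G \<and> (\<forall>y\<in>{xL..xH}. c t x + g * (y - x) \<le> c t y))"

fun work :: "real \<Rightarrow> real \<Rightarrow> (real \<Rightarrow> real) \<Rightarrow> (nat \<Rightarrow> real \<Rightarrow> real) \<Rightarrow> nat \<Rightarrow> real \<Rightarrow> real" where
  "work xL xH N c 0 x = N x"
| "work xL xH N c (Suc t) x =
     Inf ((\<lambda>y. work xL xH N c t y + c (Suc t) y + N (x - y)) ` {xL..xH})"

definition OPT :: "real \<Rightarrow> real \<Rightarrow> (real \<Rightarrow> real) \<Rightarrow> nat \<Rightarrow> (nat \<Rightarrow> real \<Rightarrow> real) \<Rightarrow> real" where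
  "OPT xL xH N T c =
     Inf {(\<Sum>t=1..T. c t (xs t) + N (xs t - xs (t - 1))) | xs.
            xs 0 = 0 \<and> (\<forall>t\<in>{1..T}. xs t \<in> {xL..xH})}"

definition RBG_run :: "real \<Rightarrow> real \<Rightarrow> (real \<Rightarrow> real) \<Rightarrow> nat \<Rightarrow> (nat \<Rightarrow> real \<Rightarrow> real)
     \<Rightarrow> (nat \<Rightarrow> real \<Rightarrow> real) \<Rightarrow> bool" where
  "RBG_run xL xH N T c X \<longleftrightarrow>
     (\<forall>r\<in>{-1<..<1}. \<forall>t\<in>{1..T+1}. X t r \<in> {xL..xH} \<and>
        (\<forall>x\<in>{xL..xH}. work xL xH N c (t - 1) (X t r) + r * N (X t r)
                        \<le> work xL xH N c (t - 1) x + r * N x))"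

definition SC :: "(real \<Rightarrow> real) \<Rightarrow> nat \<Rightarrow> (nat \<Rightarrow> real \<Rightarrow> real) \<Rightarrow> real \<Rightarrow> real" where
  "SC nrm T X r = (\<Sum>t=1..T. nrm (X (t + 1) r - X t r))"

end

theory Submission
  imports Defs
begin


lemma sum_tel2: "(\<Sum>i<k. e i - e (Suc (Suc i))) = e 0 + e 1 - e k - e (Suc k :: nat)" for e :: "nat \<Rightarrow> real"
  by (induction k) auto

lemma integral_pieces:
  fixes f :: "real \<Rightarrow> real"
  assumes int: "f integrable_on {p..q}" and pq: "p \<le> q" and k: "k > 0"
  shows "integral {p..q} f = (\<Sum>i<k. integral {p + real i * ((q-p)/k) .. p + real (Suc i) * ((q-p)/k)} f)"
proof -
  define d where "d = (q-p)/k"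
  have d0: "d \<ge> 0" using pq k by (simp add: d_def)
  have kd: "p + real k * d = q" using k by (simp add: d_def)
  have "j \<le> k \<Longrightarrow> integral {p..p + real j * d} f = (\<Sum>i<j. integral {p + real i * d .. p + real (Suc i) * d} f)" for j
  proof (induction j)
    case 0 then show ?case by simp
  next
    case (Suc j)
    have "real (Suc j) * d \<le> real k * d"
      by (rule mult_right_mono) (use Suc.prems d0 in auto)
    then have sub: "{p..p + real (Suc j) * d} \<subseteq> {p..q}"
      using d0 kd by auto
    have "integral {p..p + real j * d} f + integral {p + real j * d..p + real (Suc j) * d} f
        = integral {p..p + real (Suc j) * d} f"
      by (rule Henstock_Kurzweil_Integration.integral_combine) (use d0 sub in \<open>auto simp: algebra_simps intro: integrable_subinterval_real[OF int]\<close>)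
    then show ?case using Suc by simp
  qed
  from this[of k] show ?thesis using kd by (simp add: d_def)
qed

lemma supgrad_mono:
  fixes g U :: "real \<Rightarrow> real"
  assumes sup: "\<And>r s. r \<in> S \<Longrightarrow> s \<in> S \<Longrightarrow> g s \<le> g r + (s - r) * U r"
    and "r \<in> S" "s \<in> S" "r \<le> s"
  shows "U s \<le> U r"
proof (cases "r = s")
  case False
  have "g r \<le> g s + (r - s) * U s" "g s \<le> g r + (s - r) * U r" using sup assms by auto
  then have "(s - r) * U s \<le> (s - r) * U r" by (simp add: algebra_simps)
  then show ?thesis using False \<open>r \<le> s\<close> by simp
qed simp

lemma step_bound_k:
  fixes U V gU gV :: "real \<Rightarrow> real"
  assumes pq: "p < q" and k: "(k::nat) > 0"
    and supU: "\<And>r s. r\<in>{p..q} \<Longrightarrow> s\<in>{p..q} \<Longrightarrow> gU s \<le> gU r + (s - r) * U r"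
    and supV: "\<And>r s. r\<in>{p..q} \<Longrightarrow> s\<in>{p..q} \<Longrightarrow> gV s \<le> gV r + (s - r) * V r"
    and bnd: "\<And>r. r\<in>{p..q} \<Longrightarrow> lo \<le> U r \<and> U r \<le> hi \<and> lo \<le> V r \<and> V r \<le> hi"
    and sign: "\<And>r s. r\<in>{p..q} \<Longrightarrow> s\<in>{p..q} \<Longrightarrow> s < r \<Longrightarrow> V r \<le> U s"
    and int: "(\<lambda>x. \<bar>U x - V x\<bar>) integrable_on {p..q}"
  shows "integral {p..q} (\<lambda>x. \<bar>U x - V x\<bar>) \<le> (gU q - gV q) - (gU p - gV p) + 6 * ((q-p)/k) * (hi - lo)"
proof -
  define d where "d = (q-p)/k"
  define rr where "rr i = p + real i * d" for i
  define e where "e j = (if j \<le> k then V (rr j) else lo)" for j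
  define a where "a i = gU (rr i) - gV (rr i)" for i
  define B where "B i = U (rr i) - V (rr (Suc i)) + 2 * (e i - e (Suc (Suc i)))" for i
  have d0: "d > 0" using pq k by (simp add: d_def)
  have rrk: "rr k = q" "rr 0 = p" using k by (auto simp: rr_def d_def)
  have rrS: "rr (Suc i) = rr i + d" for i by (simp add: rr_def algebra_simps)
  have rrin: "rr i \<in> {p..q}" if "i \<le> k" for i
  proof -
    have "real i * d \<le> real k * d" using that d0 by (intro mult_right_mono) auto
    then show ?thesis using d0 rrk by (auto simp: rr_def)
  qed
  have monoU: "U s \<le> U r" if "r\<in>{p..q}" "s\<in>{p..q}" "r \<le> s" for r s
    by (rule supgrad_mono[of "{p..q}" gU U, OF supU]) (use that in auto)
  have monoV: "V s \<le> V r" if "r\<in>{p..q}" "s\<in>{p..q}" "r \<le> s" for r s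
    by (rule supgrad_mono[of "{p..q}" gV V, OF supV]) (use that in auto)
  have lohi: "lo \<le> hi" using bnd[of p] pq by auto
  have erange: "lo \<le> e j \<and> e j \<le> hi" for j
    using bnd rrin lohi by (auto simp: e_def)
  have piece: "integral {rr i..rr (Suc i)} (\<lambda>x. \<bar>U x - V x\<bar>) \<le> d * B i" if i: "i < k" for i
  proof -
    have sub: "{rr i..rr (Suc i)} \<subseteq> {p..q}" using rrin[of i] rrin[of "Suc i"] i by auto
    have pt: "\<bar>U x - V x\<bar> \<le> B i" if x: "x \<in> {rr i..rr (Suc i)}" for x
    proof -
      have xin: "x \<in> {p..q}" using sub x by auto
      have ri: "rr i \<in> {p..q}" "rr (Suc i) \<in> {p..q}" using rrin i by auto
      have u1: "U x \<le> U (rr i)" using monoU[OF ri(1) xin] x by auto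
      have v1: "V (rr (Suc i)) \<le> V x" using monoV[OF xin ri(2)] x by auto
      have ei: "e i = V (rr i)" using i by (simp add: e_def)
      have v2: "V x \<le> V (rr i)" using monoV[OF ri(1) xin] x by auto
      have E: "V x - U x \<le> e i - e (Suc (Suc i)) \<and> 0 \<le> e i - e (Suc (Suc i))"
      proof (cases "Suc (Suc i) \<le> k")
        case True
        have r2: "rr (Suc (Suc i)) \<in> {p..q}" using rrin True by auto
        have "x < rr (Suc (Suc i))" using x d0 rrS[of "Suc i"] by auto
        then have "V (rr (Suc (Suc i))) \<le> U x" using sign[OF r2 xin] by auto
        moreover have "V (rr (Suc (Suc i))) \<le> V (rr i)"
          using monoV[OF ri(1) r2] rrS[of i] rrS[of "Suc i"] d0 by auto
        ultimately show ?thesis using True ei v2 by (simp add: e_def)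
      next
        case False
        then show ?thesis using ei v2 bnd[OF xin] bnd[OF ri(1)] by (simp add: e_def)
      qed
      show ?thesis using u1 v1 E by (simp add: B_def abs_if)
    qed
    have "integral {rr i..rr (Suc i)} (\<lambda>x. \<bar>U x - V x\<bar>) \<le> integral {rr i..rr (Suc i)} (\<lambda>x. B i)"
      by (rule integral_le) (use pt integrable_subinterval_real[OF int sub] in auto)
    also have "\<dots> = d * B i" using rrS[of i] d0 by simp
    finally show ?thesis .
  qed
  have perI: "d * B i \<le> (a (Suc i) - a i) + d * (U (rr i) - U (rr (Suc i))) + d * (V (rr i) - V (rr (Suc i)))
                + 2 * d * (e i - e (Suc (Suc i)))" if i: "i < k" for i
  proof -
    have ri: "rr i \<in> {p..q}" "rr (Suc i) \<in> {p..q}" using rrin i by auto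
    have "gU (rr i) \<le> gU (rr (Suc i)) + (rr i - rr (Suc i)) * U (rr (Suc i))" using supU ri by auto
    moreover have "gV (rr (Suc i)) \<le> gV (rr i) + (rr (Suc i) - rr i) * V (rr i)" using supV ri by auto
    ultimately show ?thesis using rrS[of i] by (simp add: B_def a_def algebra_simps)
  qed
  have "integral {p..q} (\<lambda>x. \<bar>U x - V x\<bar>) = (\<Sum>i<k. integral {rr i..rr (Suc i)} (\<lambda>x. \<bar>U x - V x\<bar>))"
    using integral_pieces[OF int _ k] pq by (simp add: rr_def d_def)
  also have "\<dots> \<le> (\<Sum>i<k. d * B i)" by (rule sum_mono) (use piece in auto)
  also have "\<dots> \<le> (\<Sum>i<k. (a (Suc i) - a i) + d * (U (rr i) - U (rr (Suc i))) + d * (V (rr i) - V (rr (Suc i)))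
                + 2 * d * (e i - e (Suc (Suc i))))" by (rule sum_mono) (use perI in auto)
  also have "\<dots> = (a k - a 0) + d * (U (rr 0) - U (rr k)) + d * (V (rr 0) - V (rr k))
                + 2 * d * (e 0 + e 1 - e k - e (Suc k))"
    by (simp add: sum.distrib sum_distrib_left[symmetric] sum_subtractf[symmetric] sum_lessThan_telescope sum_lessThan_telescope' sum_tel2
        sum_lessThan_telescope'[of "\<lambda>i. U (rr i)"] sum_lessThan_telescope'[of "\<lambda>i. V (rr i)"])
  also have "\<dots> \<le> (gU q - gV q) - (gU p - gV p) + 6 * d * (hi - lo)"
  proof -
    have "U (rr 0) - U (rr k) \<le> hi - lo" "V (rr 0) - V (rr k) \<le> hi - lo"
      using bnd[OF rrin[of 0]] bnd[OF rrin[of k]] by auto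
    moreover have "e 0 + e 1 - e k - e (Suc k) \<le> 2 * (hi - lo)" using erange[of 0] erange[of 1] erange[of k] erange[of "Suc k"] by simp
    ultimately have "d * (U (rr 0) - U (rr k)) \<le> d * (hi - lo)" "d * (V (rr 0) - V (rr k)) \<le> d * (hi - lo)"
      "d * (e 0 + e 1 - e k - e (Suc k)) \<le> d * (2 * (hi - lo))"
      using d0 by (auto intro: mult_left_mono)
    then show ?thesis using rrk by (simp add: a_def algebra_simps)
  qed
  finally show ?thesis by (simp add: d_def)
qed

lemma antimono_integrable:
  fixes U :: "real \<Rightarrow> real"
  assumes "\<And>r s. r\<in>{p..q} \<Longrightarrow> s\<in>{p..q} \<Longrightarrow> r \<le> s \<Longrightarrow> U s \<le> U r"
  shows "integrable (lebesgue_on {p..q}) U"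
proof -
  have "mono_on {p..q} (\<lambda>x. - U x)" using assms by (auto simp: mono_on_def)
  then have "integrable (lebesgue_on {p..q}) (\<lambda>x. - U x)" by (rule integrable_mono_on)
  then show ?thesis by simp
qed

lemma step_bound:
  fixes U V gU gV :: "real \<Rightarrow> real"
  assumes pq: "p \<le> q"
    and supU: "\<And>r s. r\<in>{p..q} \<Longrightarrow> s\<in>{p..q} \<Longrightarrow> gU s \<le> gU r + (s - r) * U r"
    and supV: "\<And>r s. r\<in>{p..q} \<Longrightarrow> s\<in>{p..q} \<Longrightarrow> gV s \<le> gV r + (s - r) * V r"
    and bnd: "\<And>r. r\<in>{p..q} \<Longrightarrow> lo \<le> U r \<and> U r \<le> hi \<and> lo \<le> V r \<and> V r \<le> hi"
    and sign: "\<And>r s. r\<in>{p..q} \<Longrightarrow> s\<in>{p..q} \<Longrightarrow> s < r \<Longrightarrow> V r \<le> U s"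
  shows "integral {p..q} (\<lambda>x. \<bar>U x - V x\<bar>) \<le> (gU q - gV q) - (gU p - gV p)"
proof (cases "p = q")
  case True then show ?thesis by simp
next
  case False
  then have pq': "p < q" using pq by simp
  have monoU: "U s \<le> U r" if "r\<in>{p..q}" "s\<in>{p..q}" "r \<le> s" for r s
    by (rule supgrad_mono[of "{p..q}" gU U, OF supU]) (use that in auto)
  have monoV: "V s \<le> V r" if "r\<in>{p..q}" "s\<in>{p..q}" "r \<le> s" for r s
    by (rule supgrad_mono[of "{p..q}" gV V, OF supV]) (use that in auto)
  have "integrable (lebesgue_on {p..q}) (\<lambda>x. \<bar>U x - V x\<bar>)"
    using antimono_integrable[of p q U, OF monoU] antimono_integrable[of p q V, OF monoV] by auto
  then have int: "(\<lambda>x. \<bar>U x - V x\<bar>) integrable_on {p..q}"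
    by (rule integrable_on_lebesgue_on) auto
  define I where "I = integral {p..q} (\<lambda>x. \<bar>U x - V x\<bar>)"
  define D where "D = (gU q - gV q) - (gU p - gV p)"
  define C where "C = 6 * (q - p) * (hi - lo)"
  have lohi: "lo \<le> hi" using bnd[of p] pq by auto
  have C0: "C \<ge> 0" using lohi pq by (simp add: C_def)
  have kb: "I \<le> D + C / real k" if "k > 0" for k
    using step_bound_k[OF pq' that supU supV bnd sign int] by (simp add: I_def D_def C_def)
  show ?thesis
  proof (rule ccontr)
    assume "\<not> ?thesis"
    then have gap: "I - D > 0" by (simp add: I_def D_def)
    obtain k :: nat where k: "C / (I - D) < real k" using reals_Archimedean2 by blast
    have "0 \<le> C / (I - D)" using C0 gap by simp
    then have kpos: "k > 0" using k by (cases k) auto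
    have "C < real k * (I - D)" using k gap by (simp add: pos_divide_less_eq mult.commute)
    then have "C / real k < I - D" using kpos by (simp add: divide_less_eq mult.commute)
    then show False using kb[OF kpos] by simp
  qed
qed




locale rbg =
  fixes xL xH L G :: real and T :: nat and N :: "real \<Rightarrow> real" and c X :: "nat \<Rightarrow> real \<Rightarrow> real"
  assumes xL0: "0 \<le> xL" and xLH: "xL \<le> xH" and L0: "0 < L"
    and Nlin: "\<And>x. N x = L * \<bar>x\<bar>"
    and cnonneg: "\<And>t y. t \<in> {1..T} \<Longrightarrow> y \<in> {xL..xH} \<Longrightarrow> 0 \<le> c t y"
    and cconv: "\<And>t. t \<in> {1..T} \<Longrightarrow> convex_on {xL..xH} (c t)"
    and clip: "\<And>t x y. t \<in> {1..T} \<Longrightarrow> x \<in> {xL..xH} \<Longrightarrow> y \<in> {xL..xH} \<Longrightarrow> c t x \<le> c t y + G * \<bar>x - y\<bar>"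
    and run: "RBG_run xL xH N T c X"
begin

abbreviation "w \<equiv> work xL xH N c"

lemma F_ne: "{xL..xH} \<noteq> {}" using xLH by auto

lemma N_nonneg: "0 \<le> N x" using L0 by (simp add: Nlin)

lemma w_Suc: "w (Suc t) x = Inf ((\<lambda>y. w t y + c (Suc t) y + N (x - y)) ` {xL..xH})"
  by simp

lemma w_nonneg: "t \<le> T \<Longrightarrow> 0 \<le> w t x"
proof (induction t arbitrary: x)
  case 0 then show ?case by (simp add: N_nonneg)
next
  case (Suc t)
  show ?case unfolding w_Suc
    by (rule cInf_greatest) (use F_ne Suc cnonneg[of "Suc t"] in \<open>auto intro!: add_nonneg_nonneg N_nonneg\<close>)
qed

lemma w_bdd: "Suc t \<le> T \<Longrightarrow> bdd_below ((\<lambda>y. w t y + c (Suc t) y + N (x - y)) ` {xL..xH})"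
  by (rule bdd_belowI[of _ 0]) (use w_nonneg cnonneg[of "Suc t"] in \<open>auto intro!: add_nonneg_nonneg N_nonneg\<close>)

lemma w_le: "Suc t \<le> T \<Longrightarrow> y \<in> {xL..xH} \<Longrightarrow> w (Suc t) x \<le> w t y + c (Suc t) y + N (x - y)"
  unfolding w_Suc by (rule cInf_lower) (use w_bdd in auto)

lemma w_lip: "t \<le> T \<Longrightarrow> w t x \<le> w t x' + L * \<bar>x - x'\<bar>"
proof (cases t)
  case 0
  then show ?thesis using L0 by (simp add: Nlin) (smt (verit) abs_triangle_ineq4 mult_left_mono distrib_left)
next
  case (Suc t0)
  assume tT: "t \<le> T"
  have "w (Suc t0) x - L * \<bar>x - x'\<bar> \<le> w (Suc t0) x'"
    unfolding w_Suc[of t0 x']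
  proof (rule cInf_greatest)
    show "(\<lambda>y. w t0 y + c (Suc t0) y + N (x' - y)) ` {xL..xH} \<noteq> {}" using F_ne by auto
    fix v assume "v \<in> (\<lambda>y. w t0 y + c (Suc t0) y + N (x' - y)) ` {xL..xH}"
    then obtain y where y: "y \<in> {xL..xH}" "v = w t0 y + c (Suc t0) y + N (x' - y)" by auto
    have "w (Suc t0) x \<le> w t0 y + c (Suc t0) y + N (x - y)" using w_le Suc tT y by auto
    moreover have "N (x - y) \<le> N (x' - y) + L * \<bar>x - x'\<bar>"
      using L0 by (simp add: Nlin) (smt (verit) abs_triangle_ineq4 mult_left_mono distrib_left abs_diff_triangle_ineq)
    ultimately show "w (Suc t0) x - L * \<bar>x - x'\<bar> \<le> v" using y by simp
  qed
  then show ?thesis using Suc by simp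
qed

lemma w_mono: "Suc t \<le> T \<Longrightarrow> w t x \<le> w (Suc t) x"
  unfolding w_Suc[of t x]
proof (rule cInf_greatest)
  assume tT: "Suc t \<le> T"
  show "(\<lambda>y. w t y + c (Suc t) y + N (x - y)) ` {xL..xH} \<noteq> {}" using F_ne by auto
  fix v assume "v \<in> (\<lambda>y. w t y + c (Suc t) y + N (x - y)) ` {xL..xH}"
  then obtain y where y: "y \<in> {xL..xH}" "v = w t y + c (Suc t) y + N (x - y)" by auto
  have "w t x \<le> w t y + L * \<bar>x - y\<bar>" using w_lip tT by auto
  moreover have "0 \<le> c (Suc t) y" using cnonneg tT y by auto
  ultimately show "w t x \<le> v" using y by (simp add: Nlin)
qed


end


context rbg begin

lemma w_path:
  assumes xs0: "xs 0 = 0" and xsF: "\<forall>t\<in>{1..T}. xs t \<in> {xL..xH}"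
  shows "t \<le> T \<Longrightarrow> w t x \<le> (\<Sum>i=1..t. c i (xs i) + N (xs i - xs (i-1))) + N (x - xs t)"
proof (induction t arbitrary: x)
  case 0 then show ?case using xs0 by simp
next
  case (Suc t)
  have in1: "xs (Suc t) \<in> {xL..xH}" using xsF Suc.prems by auto
  have "w (Suc t) x \<le> w t (xs (Suc t)) + c (Suc t) (xs (Suc t)) + N (x - xs (Suc t))"
    using w_le[OF Suc.prems in1] .
  also have "\<dots> \<le> (\<Sum>i=1..t. c i (xs i) + N (xs i - xs (i-1))) + N (xs (Suc t) - xs t)
        + c (Suc t) (xs (Suc t)) + N (x - xs (Suc t))"
    using Suc.IH[of "xs (Suc t)"] Suc.prems by simp
  also have "\<dots> = (\<Sum>i=1..Suc t. c i (xs i) + N (xs i - xs (i-1))) + N (x - xs (Suc t))"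
    by simp
  finally show ?case .
qed

definition Xp :: "nat \<Rightarrow> real \<Rightarrow> real" where
  "Xp t r = (if r \<le> -1 then xH else if 1 \<le> r then xL else X t r)"

definition gp :: "nat \<Rightarrow> real \<Rightarrow> real" where
  "gp t r = w (t - 1) (Xp t r) + r * L * Xp t r"

lemma run_in: "t \<in> {1..T+1} \<Longrightarrow> r \<in> {-1<..<1} \<Longrightarrow> X t r \<in> {xL..xH}"
  using run unfolding RBG_run_def by blast

lemma run_min: "t \<in> {1..T+1} \<Longrightarrow> r \<in> {-1<..<1} \<Longrightarrow> x \<in> {xL..xH} \<Longrightarrow>
   w (t - 1) (X t r) + r * L * X t r \<le> w (t - 1) x + r * L * x"
proof -
  assume a: "t \<in> {1..T+1}" "r \<in> {-1<..<1}" "x \<in> {xL..xH}"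
  have "w (t - 1) (X t r) + r * N (X t r) \<le> w (t - 1) x + r * N x"
    using run a unfolding RBG_run_def by blast
  moreover have "X t r \<ge> 0" "x \<ge> 0" using run_in[OF a(1,2)] a(3) xL0 by auto
  ultimately show ?thesis by (simp add: Nlin)
qed

lemma Xp_in: "t \<in> {1..T+1} \<Longrightarrow> r \<in> {-1..1} \<Longrightarrow> Xp t r \<in> {xL..xH}"
  using run_in[of t r] xLH by (auto simp: Xp_def)

lemma Xp_min: assumes t: "t \<in> {1..T+1}" and r: "r \<in> {-1..1}" and x: "x \<in> {xL..xH}"
  shows "w (t - 1) (Xp t r) + r * L * Xp t r \<le> w (t - 1) x + r * L * x"
proof -
  have tT: "t - 1 \<le> T" using t by auto
  consider "r = -1" | "r = 1" | "r \<in> {-1<..<1}" using r by fastforce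
  then show ?thesis
  proof cases
    case 1
    have "w (t - 1) xH \<le> w (t - 1) x + L * \<bar>xH - x\<bar>" using w_lip[OF tT] .
    then show ?thesis using 1 x by (simp add: Xp_def algebra_simps)
  next
    case 2
    have "w (t - 1) xL \<le> w (t - 1) x + L * \<bar>xL - x\<bar>" using w_lip[OF tT] .
    then show ?thesis using 2 x by (simp add: Xp_def algebra_simps)
  next
    case 3
    then show ?thesis using run_min[OF t 3 x] by (simp add: Xp_def)
  qed
qed

lemma gp_sup: "t \<in> {1..T+1} \<Longrightarrow> r \<in> {-1..1} \<Longrightarrow> s \<in> {-1..1} \<Longrightarrow>
    gp t s \<le> gp t r + (s - r) * (L * Xp t r)"
  using Xp_min[of t s "Xp t r"] Xp_in[of t r] by (simp add: gp_def algebra_simps)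

lemma Xp_mono: "t \<in> {1..T+1} \<Longrightarrow> r \<in> {-1..1} \<Longrightarrow> s \<in> {-1..1} \<Longrightarrow> r \<le> s \<Longrightarrow> Xp t s \<le> Xp t r"
  using supgrad_mono[of "{-1..1}" "gp t" "\<lambda>r. L * Xp t r" r s] gp_sup[of t] L0 by auto

end


context rbg begin

lemma W5:
  assumes t: "t \<in> {1..T}" and s: "s \<in> {-1<..<1}"
  shows "w (t - 1) (X (t+1) s) + c t (X (t+1) s) \<le> w t (X (t+1) s)"
proof -
  define z where "z = X (t+1) s"
  define u where "u y = w (t - 1) y + c t y" for y
  obtain t0 where t0: "t = Suc t0" using t by (cases t) auto
  have tT: "Suc t0 \<le> T" using t t0 by auto
  have zF: "z \<in> {xL..xH}" using run_in[of "t+1" s] s t by (simp add: z_def)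
  have star: "w t z + s * L * z \<le> u y + s * L * y" if y: "y \<in> {xL..xH}" for y
  proof -
    have "w t z + s * L * z \<le> w t y + s * L * y" using run_min[of "t+1" s y] s t y by (simp add: z_def)
    moreover have "w t y \<le> u y" using w_le[OF tT y, of y] by (simp add: u_def Nlin t0 del: work.simps)
    ultimately show ?thesis by simp
  qed
  define M where "M = L + \<bar>G\<bar>"
  define \<kappa> where "\<kappa> = (1 - \<bar>s\<bar>) * L"
  have \<kappa>0: "\<kappa> > 0" using s L0 by (auto simp: \<kappa>_def)
  have M0: "M \<ge> 0" using L0 by (simp add: M_def)
  have eps: "u z \<le> w t z + (1 + M / \<kappa>) * \<epsilon>" if e: "\<epsilon> > 0" for \<epsilon>
  proof -
    have "w t z = Inf ((\<lambda>y. w (t - 1) y + c t y + N (z - y)) ` {xL..xH})"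
      using w_Suc[of t0 z] by (simp add: t0 del: work.simps)
    then have "Inf ((\<lambda>y. w (t - 1) y + c t y + N (z - y)) ` {xL..xH}) < w t z + \<epsilon>" using e by simp
    moreover have ne: "(\<lambda>y. w (t - 1) y + c t y + N (z - y)) ` {xL..xH} \<noteq> {}" using F_ne by simp
    ultimately obtain v where "v \<in> (\<lambda>y. w (t - 1) y + c t y + N (z - y)) ` {xL..xH}" "v < w t z + \<epsilon>"
      using cInf_lessD[OF ne] by blast
    then obtain y where y: "y \<in> {xL..xH}" and yv: "u y + L * \<bar>z - y\<bar> < w t z + \<epsilon>"
      by (auto simp: u_def Nlin)
    have "\<kappa> * \<bar>z - y\<bar> \<le> L * \<bar>z - y\<bar> + s * L * (z - y)"
    proof -
      have "- (\<bar>s\<bar> * \<bar>z - y\<bar>) \<le> s * (z - y)" using abs_ge_minus_self[of "s * (z - y)"] abs_mult[of s "z - y"] by linarith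
      then have "L * (- (\<bar>s\<bar> * \<bar>z - y\<bar>)) \<le> L * (s * (z - y))" using L0 by (intro mult_left_mono) auto
      then show ?thesis by (simp add: \<kappa>_def algebra_simps)
    qed
    also have "\<dots> < \<epsilon>"
    proof -
      have "s * L * (z - y) = s * L * z - s * L * y" by (simp add: algebra_simps)
      then show ?thesis using yv star[OF y] by linarith
    qed
    finally have zy: "\<bar>z - y\<bar> \<le> \<epsilon> / \<kappa>" using \<kappa>0 by (simp add: pos_le_divide_eq mult.commute)
    have "u z \<le> u y + M * \<bar>z - y\<bar>"
    proof -
      have "w (t - 1) z \<le> w (t - 1) y + L * \<bar>z - y\<bar>" using w_lip t by auto
      moreover have "c t z \<le> c t y + G * \<bar>z - y\<bar>" using clip[OF t zF y] .
      moreover have "G * \<bar>z - y\<bar> \<le> \<bar>G\<bar> * \<bar>z - y\<bar>" by (intro mult_right_mono) auto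
      ultimately show ?thesis by (simp add: u_def M_def algebra_simps)
    qed
    also have "\<dots> \<le> u y + M * (\<epsilon> / \<kappa>)" using zy M0 by (intro add_left_mono mult_left_mono) auto
    also have "\<dots> \<le> w t z + \<epsilon> + M * (\<epsilon> / \<kappa>)"
    proof -
      have "0 \<le> L * \<bar>z - y\<bar>" using L0 by simp
      then show ?thesis using yv by linarith
    qed
    finally show ?thesis by (simp add: algebra_simps)
  qed
  have "0 \<le> M / \<kappa>" using M0 \<kappa>0 by simp
  then have K0: "1 + M / \<kappa> > 0" by linarith
  have "u z \<le> w t z"
  proof (rule field_le_epsilon)
    fix e :: real assume "e > 0"
    then have "e / (1 + M / \<kappa>) > 0" using K0 by simp
    then have "u z \<le> w t z + (1 + M / \<kappa>) * (e / (1 + M / \<kappa>))" by (rule eps)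
    then show "u z \<le> w t z + e" using K0 by simp
  qed
  then show ?thesis by (simp add: u_def z_def)
qed

end



lemma convex_valley:
  fixes f :: "real \<Rightarrow> real"
  assumes cv: "convex_on {xL..xH} f" and m: "m \<in> {xL..xH}" and mmin: "\<forall>y\<in>{xL..xH}. f m \<le> f y"
    and a: "a \<in> {xL..xH}" and b: "b \<in> {xL..xH}"
    and ord: "(b \<le> a \<and> a \<le> m) \<or> (m \<le> a \<and> a \<le> b)"
  shows "f a \<le> f b"
proof (cases "b = m")
  case True
  then have "a = m" using ord by auto
  then show ?thesis using True by simp
next
  case False
  define l where "l = (a - b) / (m - b)"
  have l01: "0 \<le> l" "l \<le> 1" using ord False
    by (auto simp: l_def divide_simps split: if_splits)
  have lm: "l * (m - b) = a - b" using False by (simp add: l_def)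
  have "(1 - l) * b + l * m = b + l * (m - b)" by (simp add: algebra_simps)
  then have "(1 - l) * b + l * m = a" using lm by simp
  then have "f a = f ((1 - l) *\<^sub>R b + l *\<^sub>R m)" by simp
  also have "\<dots> \<le> (1 - l) * f b + l * f m" by (rule convex_onD[OF cv l01 b m])
  also have "\<dots> \<le> (1 - l) * f b + l * f b" using mmin b l01 by (intro add_left_mono mult_left_mono) auto
  finally show ?thesis by (simp add: algebra_simps)
qed

context rbg begin

lemma c_argmin: assumes t: "t \<in> {1..T}" shows "\<exists>m\<in>{xL..xH}. \<forall>y\<in>{xL..xH}. c t m \<le> c t y"
proof -
  have "\<bar>G\<bar>-lipschitz_on {xL..xH} (c t)"
    unfolding lipschitz_on_def
  proof (intro conjI ballI)
    fix x y assume x: "x \<in> {xL..xH}" and y: "y \<in> {xL..xH}"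
    have "c t x \<le> c t y + G * \<bar>x - y\<bar>" "c t y \<le> c t x + G * \<bar>y - x\<bar>" using clip[OF t] x y by auto
    moreover have "G * \<bar>x - y\<bar> \<le> \<bar>G\<bar> * \<bar>x - y\<bar>" by (intro mult_right_mono) auto
    ultimately show "dist (c t x) (c t y) \<le> \<bar>G\<bar> * dist x y"
      by (simp add: dist_real_def abs_minus_commute abs_le_iff)
  qed simp
  then have "continuous_on {xL..xH} (c t)" by (rule lipschitz_on_continuous_on)
  then show ?thesis using continuous_attains_inf[of "{xL..xH}" "c t"] F_ne by auto
qed

lemma core_ineq:
  assumes t: "t \<in> {1..T}" and r: "r \<in> {-1<..<1}" and s: "s \<in> {-1<..<1}"
  shows "c t (X (t+1) s) - c t (X t r) \<le> (r - s) * L * (X (t+1) s - X t r)"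
proof -
  define a where "a = X t r"
  define b where "b = X (t+1) s"
  obtain t0 where t0: "t = Suc t0" using t by (cases t) auto
  have aF: "a \<in> {xL..xH}" using run_in[of t r] t r by (simp add: a_def)
  have bF: "b \<in> {xL..xH}" using run_in[of "t+1" s] t s by (simp add: b_def)
  have h1: "w (t - 1) a + r * L * a \<le> w (t - 1) b + r * L * b" using run_min[of t r b] t r bF by (simp add: a_def)
  have h2: "w t b + s * L * b \<le> w t a + s * L * a" using run_min[of "t+1" s a] t s aF by (simp add: b_def)
  have h3: "w (t - 1) b + c t b \<le> w t b" using W5[OF t s] by (simp add: b_def)
  have h4: "w t a \<le> w (t - 1) a + c t a"
    using w_le[of t0 a a] t aF by (simp add: t0 Nlin del: work.simps)
  have "(r - s) * L * (b - a) = r * L * b - r * L * a + s * L * a - s * L * b" by (simp add: algebra_simps)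
  then show ?thesis using h1 h2 h3 h4 unfolding a_def b_def by linarith
qed

lemma sign1:
  assumes t: "t \<in> {1..T}" and m: "m \<in> {xL..xH}" and mmin: "\<forall>y\<in>{xL..xH}. c t m \<le> c t y"
    and r: "r \<in> {-1..1}" and s: "s \<in> {-1..1}" and sr: "s < r" and am: "Xp t r \<le> m"
  shows "Xp t r \<le> Xp (t+1) s"
proof -
  have t1: "t \<in> {1..T+1}" "t + 1 \<in> {1..T+1}" using t by auto
  consider "r = 1" | "s = -1" | "r \<in> {-1<..<1}" "s \<in> {-1<..<1}" using r s sr by fastforce
  then show ?thesis
  proof cases
    case 1 then show ?thesis using Xp_in[OF t1(2) s] by (simp add: Xp_def)
  next
    case 2 then show ?thesis using Xp_in[OF t1(1) r] by (simp add: Xp_def)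
  next
    case 3
    show ?thesis
    proof (rule ccontr)
      assume "\<not> ?thesis"
      then have ba: "X (t+1) s < X t r" using 3 by (simp add: Xp_def)
      have "(r - s) * L * (X (t+1) s - X t r) < 0"
        using sr L0 ba by (intro mult_pos_neg) auto
      then have "c t (X (t+1) s) < c t (X t r)" using core_ineq[OF t 3] by linarith
      moreover have "c t (X t r) \<le> c t (X (t+1) s)"
        using convex_valley[OF cconv[OF t] m mmin run_in[OF t1(1) 3(1)] run_in[OF t1(2) 3(2)]] ba am 3
        by (simp add: Xp_def)
      ultimately show False by simp
    qed
  qed
qed

lemma sign2:
  assumes t: "t \<in> {1..T}" and m: "m \<in> {xL..xH}" and mmin: "\<forall>y\<in>{xL..xH}. c t m \<le> c t y"
    and r: "r \<in> {-1..1}" and s: "s \<in> {-1..1}" and sr: "r < s" and am: "m \<le> Xp t r"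
  shows "Xp (t+1) s \<le> Xp t r"
proof -
  have t1: "t \<in> {1..T+1}" "t + 1 \<in> {1..T+1}" using t by auto
  consider "s = 1" | "r = -1" | "r \<in> {-1<..<1}" "s \<in> {-1<..<1}" using r s sr by fastforce
  then show ?thesis
  proof cases
    case 1 then show ?thesis using Xp_in[OF t1(1) r] by (simp add: Xp_def)
  next
    case 2 then show ?thesis using Xp_in[OF t1(2) s] by (simp add: Xp_def)
  next
    case 3
    show ?thesis
    proof (rule ccontr)
      assume "\<not> ?thesis"
      then have ba: "X t r < X (t+1) s" using 3 by (simp add: Xp_def)
      have "(s - r) * L * (X (t+1) s - X t r) > 0"
        using sr L0 ba by simp
      then have "c t (X (t+1) s) < c t (X t r)" using core_ineq[OF t 3] by (simp add: algebra_simps)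
      moreover have "c t (X t r) \<le> c t (X (t+1) s)"
        using convex_valley[OF cconv[OF t] m mmin run_in[OF t1(1) 3(1)] run_in[OF t1(2) 3(2)]] ba am 3
        by (simp add: Xp_def)
      ultimately show False by simp
    qed
  qed
qed

lemma D_nonneg: "t \<in> {1..T} \<Longrightarrow> r \<in> {-1..1} \<Longrightarrow> gp t r \<le> gp (t+1) r"
proof -
  assume t: "t \<in> {1..T}" and r: "r \<in> {-1..1}"
  obtain t0 where t0: "t = Suc t0" using t by (cases t) auto
  have t1: "t \<in> {1..T+1}" "t + 1 \<in> {1..T+1}" using t by auto
  have "gp t r \<le> w (t - 1) (Xp (t+1) r) + r * L * Xp (t+1) r"
    using Xp_min[OF t1(1) r Xp_in[OF t1(2) r]] by (simp add: gp_def)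
  also have "\<dots> \<le> w t (Xp (t+1) r) + r * L * Xp (t+1) r"
    using w_mono[of t0 "Xp (t+1) r"] t by (simp add: t0 del: work.simps)
  finally show ?thesis by (simp add: gp_def)
qed

end


context rbg begin

lemma Xp_int: "t \<in> {1..T+1} \<Longrightarrow> integrable (lebesgue_on {-1..1}) (Xp t)"
  by (rule antimono_integrable) (rule Xp_mono, auto)

lemma dif_int: "t \<in> {1..T} \<Longrightarrow> (\<lambda>r. \<bar>L * Xp (t+1) r - L * Xp t r\<bar>) integrable_on {-1..1}"
proof -
  assume t: "t \<in> {1..T}"
  have "integrable (lebesgue_on {-1..1}) (\<lambda>r. \<bar>L * Xp (t+1) r - L * Xp t r\<bar>)"
    using Xp_int[of t] Xp_int[of "t+1"] t by auto
  then show ?thesis by (rule integrable_on_lebesgue_on) auto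
qed

lemma step_t:
  assumes t: "t \<in> {1..T}"
  shows "integral {-1..1} (\<lambda>r. \<bar>L * Xp (t+1) r - L * Xp t r\<bar>)
     \<le> (gp (t+1) (-1) - gp t (-1)) + (gp (t+1) 1 - gp t 1)"
proof -
  have t1: "t \<in> {1..T+1}" "t + 1 \<in> {1..T+1}" using t by auto
  obtain m where m: "m \<in> {xL..xH}" and mmin: "\<forall>y\<in>{xL..xH}. c t m \<le> c t y" using c_argmin[OF t] by blast
  define S where "S = {r \<in> {-1..1}. m \<le> Xp t r}"
  define \<rho> where "\<rho> = Sup S"
  have m1: "-1 \<in> S" using m by (simp add: S_def Xp_def)
  have bS: "bdd_above S" by (rule bdd_aboveI[of _ 1]) (auto simp: S_def)
  have rho1: "-1 \<le> \<rho>" using cSup_upper[OF m1 bS] by (simp add: \<rho>_def)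
  have rho2: "\<rho> \<le> 1" unfolding \<rho>_def by (rule cSup_least) (use m1 in blast, simp add: S_def)
  have left: "m \<le> Xp t r" if r: "r \<in> {-1..1}" "r < \<rho>" for r
  proof -
    obtain r' where r': "r' \<in> S" "r < r'" using less_cSup_iff[of S r] m1 bS r by (auto simp: \<rho>_def)
    then have "Xp t r' \<le> Xp t r" using Xp_mono[OF t1(1) r(1)] by (auto simp: S_def)
    then show ?thesis using r' by (auto simp: S_def)
  qed
  have right: "Xp t r \<le> m" if r: "r \<in> {-1..1}" "\<rho> < r" for r
  proof (rule ccontr)
    assume "\<not> ?thesis"
    then have "r \<in> S" using r by (auto simp: S_def)
    then have "r \<le> \<rho>" using cSup_upper[OF _ bS] by (simp add: \<rho>_def)
    then show False using r by simp
  qed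
  have bnd: "L * xL \<le> L * Xp k r \<and> L * Xp k r \<le> L * xH" if "k \<in> {1..T+1}" "r \<in> {-1..1}" for k r
    using Xp_in[OF that] L0 by (auto intro: mult_left_mono)
  have R: "integral {\<rho>..1} (\<lambda>x. \<bar>L * Xp (t+1) x - L * Xp t x\<bar>)
       \<le> (gp (t+1) 1 - gp t 1) - (gp (t+1) \<rho> - gp t \<rho>)"
  proof (rule step_bound[where lo = "L * xL" and hi = "L * xH"])
    show "\<rho> \<le> 1" by (rule rho2)
    fix r s assume r: "r \<in> {\<rho>..1}" and s: "s \<in> {\<rho>..1}"
    have r': "r \<in> {-1..1}" and s': "s \<in> {-1..1}" using r s rho1 by auto
    show "gp (t+1) s \<le> gp (t+1) r + (s - r) * (L * Xp (t+1) r)" by (rule gp_sup[OF t1(2) r' s'])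
    show "gp t s \<le> gp t r + (s - r) * (L * Xp t r)" by (rule gp_sup[OF t1(1) r' s'])
    assume sr: "s < r"
    have "Xp t r \<le> Xp (t+1) s" using sign1[OF t m mmin r' s' sr right[OF r']] r sr s by auto
    then show "L * Xp t r \<le> L * Xp (t+1) s" using L0 by (simp add: mult_left_mono)
  next
    fix r assume r: "r \<in> {\<rho>..1}"
    then have r': "r \<in> {-1..1}" using rho1 by auto
    show "L * xL \<le> L * Xp (t+1) r \<and> L * Xp (t+1) r \<le> L * xH \<and> L * xL \<le> L * Xp t r \<and> L * Xp t r \<le> L * xH"
      using bnd[OF t1(1) r'] bnd[OF t1(2) r'] by auto
  qed
  have Lq: "integral {-1..\<rho>} (\<lambda>x. \<bar>L * Xp t x - L * Xp (t+1) x\<bar>)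
       \<le> (gp t \<rho> - gp (t+1) \<rho>) - (gp t (-1) - gp (t+1) (-1))"
  proof (rule step_bound[where lo = "L * xL" and hi = "L * xH"])
    show "-1 \<le> \<rho>" by (rule rho1)
    fix r s assume r: "r \<in> {-1..\<rho>}" and s: "s \<in> {-1..\<rho>}"
    have r': "r \<in> {-1..1}" and s': "s \<in> {-1..1}" using r s rho2 by auto
    show "gp (t+1) s \<le> gp (t+1) r + (s - r) * (L * Xp (t+1) r)" by (rule gp_sup[OF t1(2) r' s'])
    show "gp t s \<le> gp t r + (s - r) * (L * Xp t r)" by (rule gp_sup[OF t1(1) r' s'])
    assume sr: "s < r"
    have "s < \<rho>" using sr r by auto
    then have "Xp (t+1) r \<le> Xp t s" using sign2[OF t m mmin s' r' sr left[OF s']] by auto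
    then show "L * Xp (t+1) r \<le> L * Xp t s" using L0 by (simp add: mult_left_mono)
  next
    fix r assume r: "r \<in> {-1..\<rho>}"
    then have r': "r \<in> {-1..1}" using rho2 by auto
    show "L * xL \<le> L * Xp t r \<and> L * Xp t r \<le> L * xH \<and> L * xL \<le> L * Xp (t+1) r \<and> L * Xp (t+1) r \<le> L * xH"
      using bnd[OF t1(1) r'] bnd[OF t1(2) r'] by auto
  qed
  have eqf: "(\<lambda>x. \<bar>L * Xp t x - L * Xp (t+1) x\<bar>) = (\<lambda>x. \<bar>L * Xp (t+1) x - L * Xp t x\<bar>)"
    by (simp add: abs_minus_commute)
  have "integral {-1..1} (\<lambda>r. \<bar>L * Xp (t+1) r - L * Xp t r\<bar>)
      = integral {-1..\<rho>} (\<lambda>r. \<bar>L * Xp (t+1) r - L * Xp t r\<bar>) + integral {\<rho>..1} (\<lambda>r. \<bar>L * Xp (t+1) r - L * Xp t r\<bar>)"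
    using Henstock_Kurzweil_Integration.integral_combine[OF rho1 rho2 dif_int[OF t]] by simp
  also have "\<dots> \<le> (gp t \<rho> - gp (t+1) \<rho>) - (gp t (-1) - gp (t+1) (-1)) + ((gp (t+1) 1 - gp t 1) - (gp (t+1) \<rho> - gp t \<rho>))"
    using Lq R eqf by simp
  also have "\<dots> \<le> (gp (t+1) (-1) - gp t (-1)) + (gp (t+1) 1 - gp t 1)"
    using D_nonneg[OF t, of \<rho>] rho1 rho2 by simp
  finally show ?thesis .
qed

end



lemma tel1: "(\<Sum>t=1..n. f (t+1) - f t) = f (n+1) - f (1::nat)" for f :: "nat \<Rightarrow> real"
  by (induction n) auto

context rbg begin

lemma sum_int: "(\<lambda>r. \<Sum>t=1..T. \<bar>L * Xp (t+1) r - L * Xp t r\<bar>) integrable_on {-1..1}"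
  by (rule integrable_sum) (auto intro: dif_int[simplified])

lemma main_bound:
  assumes xs0: "xs 0 = 0" and xsF: "\<forall>t\<in>{1..T}. xs t \<in> {xL..xH}"
  shows "integral {-1..1} (\<lambda>r. \<Sum>t=1..T. \<bar>L * Xp (t+1) r - L * Xp t r\<bar>)
     \<le> 2 * (\<Sum>i=1..T. c i (xs i) + N (xs i - xs (i-1)))"
proof -
  define cost where "cost = (\<Sum>i=1..T. c i (xs i) + N (xs i - xs (i-1)))"
  have "integral {-1..1} (\<lambda>r. \<Sum>t=1..T. \<bar>L * Xp (t+1) r - L * Xp t r\<bar>)
      = (\<Sum>t=1..T. integral {-1..1} (\<lambda>r. \<bar>L * Xp (t+1) r - L * Xp t r\<bar>))"
    by (rule integral_sum) (auto intro: dif_int[simplified])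
  also have "\<dots> \<le> (\<Sum>t=1..T. (gp (t+1) (-1) - gp t (-1)) + (gp (t+1) 1 - gp t 1))"
    by (rule sum_mono) (rule step_t, auto)
  also have "\<dots> = (gp (T+1) (-1) - gp 1 (-1)) + (gp (T+1) 1 - gp 1 1)"
    using tel1[of "\<lambda>t. gp t (-1)" T] tel1[of "\<lambda>t. gp t 1" T] by (simp add: sum.distrib)
  also have "\<dots> \<le> 2 * cost"
  proof -
    have xH0: "0 \<le> xH" using xL0 xLH by simp
    have g1: "gp 1 (-1) = 0" "gp 1 1 = 2 * L * xL" using xL0 xH0 by (simp_all add: gp_def Xp_def Nlin)
    have gT: "gp (T+1) (-1) = w T xH - L * xH" "gp (T+1) 1 = w T xL + L * xL"
      unfolding gp_def Xp_def by simp_all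
    have z: "0 \<le> xs T \<and> xs T \<le> xH"
    proof (cases "T = 0")
      case True then show ?thesis using xs0 xH0 by simp
    next
      case False
      then have "xs T \<in> {xL..xH}" using xsF by simp
      then show ?thesis using xL0 by simp
    qed
    have wH: "w T xH \<le> cost + L * \<bar>xH - xs T\<bar>" using w_path[OF xs0 xsF, of T xH] by (simp add: cost_def Nlin)
    have wL: "w T xL \<le> cost + L * \<bar>xL - xs T\<bar>" using w_path[OF xs0 xsF, of T xL] by (simp add: cost_def Nlin)
    have "\<bar>xH - xs T\<bar> + \<bar>xL - xs T\<bar> \<le> xH + xL" using z xL0 by auto
    then have "L * \<bar>xH - xs T\<bar> + L * \<bar>xL - xs T\<bar> \<le> L * xH + L * xL"
      using L0 by (metis distrib_left mult_left_mono less_imp_le)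
    then show ?thesis using g1 gT wH wL by linarith
  qed
  finally show ?thesis by (simp add: cost_def)
qed

end


theorem lemma5:
  fixes xL xH \<theta> :: real and T :: nat
    and nrm N :: "real \<Rightarrow> real"
    and c X :: "nat \<Rightarrow> real \<Rightarrow> real"
  assumes "0 \<le> xL" and "xL \<le> xH"
    and "is_norm_real nrm"
    and "\<theta> \<ge> 1"
    and "is_norm_real N" and "N 1 = \<theta> * nrm 1"
    and "soco_costs xL xH T c"
    and "RBG_run xL xH N T c X"
  shows "(SC nrm T X) integrable_on {-1<..<1} \<and>
         integral {-1<..<1} (SC nrm T X) / 2 \<le> OPT xL xH N T c / \<theta>"
proof -
  note a = assms
  define n1 where "n1 = nrm 1"
  have nrm_lin: "nrm x = n1 * \<bar>x\<bar>" for x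
    using a(3) unfolding is_norm_real_def n1_def by (metis mult.commute mult.right_neutral)
  have n1pos: "n1 > 0"
    using a(3) unfolding is_norm_real_def n1_def by (metis less_eq_real_def one_neq_zero)
  define L where "L = \<theta> * n1"
  have L0: "L > 0" using n1pos a(4) by (simp add: L_def)
  have Nlin: "N x = L * \<bar>x\<bar>" for x
  proof -
    have "N (x * 1) = \<bar>x\<bar> * N 1" using a(5) unfolding is_norm_real_def by blast
    then show ?thesis using a(6) by (simp add: L_def n1_def)
  qed
  obtain G where G: "\<forall>t\<in>{1..T}. \<forall>x\<in>{xL..xH}. \<exists>g. \<bar>g\<bar> \<le> G \<and> (\<forall>y\<in>{xL..xH}. c t x + g * (y - x) \<le> c t y)"
    using a(7) unfolding soco_costs_def by blast
  have clip: "c t x \<le> c t y + G * \<bar>x - y\<bar>" if t: "t \<in> {1..T}" and x: "x \<in> {xL..xH}" and y: "y \<in> {xL..xH}" for t x y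
  proof -
    obtain g where g: "\<bar>g\<bar> \<le> G" "c t x + g * (y - x) \<le> c t y" using G t x y by blast
    have "- (g * (y - x)) \<le> \<bar>g\<bar> * \<bar>x - y\<bar>"
      using abs_ge_minus_self[of "g * (y - x)"] abs_mult[of g "y - x"] by (simp add: abs_minus_commute)
    also have "\<dots> \<le> G * \<bar>x - y\<bar>" using g(1) by (intro mult_right_mono) auto
    finally show ?thesis using g(2) by linarith
  qed
  interpret R: rbg xL xH L G T N c X
    apply unfold_locales
    using a(1,2,7,8) L0 Nlin clip unfolding soco_costs_def by auto
  define S' where "S' r = (\<Sum>t=1..T. \<bar>L * R.Xp (t+1) r - L * R.Xp t r\<bar>)" for r
  have eq: "SC nrm T X r = (n1 / L) * S' r" if r: "r \<in> {-1<..<1}" for r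
  proof -
    have "SC nrm T X r = (\<Sum>t=1..T. n1 * \<bar>X (t+1) r - X t r\<bar>)" by (simp add: SC_def nrm_lin)
    also have "\<dots> = (\<Sum>t=1..T. (n1 / L) * \<bar>L * R.Xp (t+1) r - L * R.Xp t r\<bar>)"
    proof (rule sum.cong)
      fix t assume "t \<in> {1..T}"
      have "\<bar>L * R.Xp (t+1) r - L * R.Xp t r\<bar> = L * \<bar>X (t+1) r - X t r\<bar>"
        using r L0 by (simp add: R.Xp_def abs_mult right_diff_distrib[symmetric])
      then show "n1 * \<bar>X (t+1) r - X t r\<bar> = (n1 / L) * \<bar>L * R.Xp (t+1) r - L * R.Xp t r\<bar>"
        using L0 by simp
    qed simp
    finally show ?thesis by (simp add: S'_def sum_distrib_left)
  qed
  have intS: "S' integrable_on {-1..1}" using R.sum_int by (simp add: S'_def[abs_def])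
  then have "(\<lambda>r. (n1 / L) * S' r) integrable_on {-1..1}"
    using integrable_on_cmult_left[OF intS, of "n1 / L"] by simp
  then have int2: "(\<lambda>r. (n1 / L) * S' r) integrable_on {-1<..<1}"
    by (simp only: integrable_on_open_interval_real)
  have int: "SC nrm T X integrable_on {-1<..<1}"
    using int2 integrable_cong[of "{-1<..<1}" "SC nrm T X" "\<lambda>r. (n1 / L) * S' r"] eq by blast
  have Ieq: "integral {-1<..<1} (SC nrm T X) = (n1 / L) * integral {-1..1} S'"
  proof -
    have "integral {-1<..<1} (SC nrm T X) = integral {-1<..<1} (\<lambda>r. (n1 / L) * S' r)"
      by (rule integral_cong) (rule eq)
    also have "\<dots> = integral {-1..1} (\<lambda>r. (n1 / L) * S' r)" by (simp add: integral_open_interval_real)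
    also have "\<dots> = (n1 / L) * integral {-1..1} S'" by simp
    finally show ?thesis .
  qed
  have nL: "n1 / L = 1 / \<theta>" using n1pos a(4) by (simp add: L_def)
  have th0: "\<theta> > 0" using a(4) by simp
  have bound: "\<theta> * (integral {-1<..<1} (SC nrm T X) / 2) \<le> v"
    if v: "v \<in> {(\<Sum>t=1..T. c t (xs t) + N (xs t - xs (t - 1))) | xs.
            xs 0 = 0 \<and> (\<forall>t\<in>{1..T}. xs t \<in> {xL..xH})}" for v
  proof -
    obtain xs where xs: "v = (\<Sum>t=1..T. c t (xs t) + N (xs t - xs (t - 1)))" "xs 0 = 0" "\<forall>t\<in>{1..T}. xs t \<in> {xL..xH}"
      using v by blast
    have "integral {-1..1} S' \<le> 2 * v"
      using R.main_bound[OF xs(2,3)] xs(1) by (simp add: S'_def[abs_def])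
    then show ?thesis using Ieq nL th0 by simp
  qed
  have ne: "{(\<Sum>t=1..T. c t (xs t) + N (xs t - xs (t - 1))) | xs.
            xs 0 = 0 \<and> (\<forall>t\<in>{1..T}. xs t \<in> {xL..xH})} \<noteq> {}"
  proof -
    define xs0 where "xs0 t = (if t = 0 then 0 else xL)" for t :: nat
    have "xs0 0 = 0 \<and> (\<forall>t\<in>{1..T}. xs0 t \<in> {xL..xH})" using a(2) by (simp add: xs0_def)
    then show ?thesis by blast
  qed
  have "\<theta> * (integral {-1<..<1} (SC nrm T X) / 2) \<le> OPT xL xH N T c"
    unfolding OPT_def by (rule cInf_greatest[OF ne]) (rule bound)
  then have "integral {-1<..<1} (SC nrm T X) / 2 \<le> OPT xL xH N T c / \<theta>"
    using th0 by (simp add: pos_le_divide_eq mult.commute)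
  then show ?thesis using int by blast
qed

end
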